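(* Let $A$ be a ghor algebra with cycle algebra $S$, and let $\mathfrak{q} \in \operatorname{Spec}S$. Then every subpath of a locally invertible cycle in the cyclic localization $A_{\mathfrak{q}}$ is locally invertible.
   Context: $k$ is an algebraically closed field; $Q$ is a dimer quiver on a compact orientable surface $\Sigma$ (smooth or with two points identified), i.e. a quiver embedded in $\Sigma$ such that each component of $\Sigma\setminus Q$ is simply connected and bounded by an oriented cycle (unit cycle). A perfect matching is a set of arrows $x$ meeting each unit cycle in exactly one arrow; $\mathcal{P}$ is the set of them. With $n=|Q_0|$, $\eta: kQ \to M_n(k[\mathcal{P}])$ is the algebra map $\eta(e_i)=e_{ii}$, $\eta(a) = e_{\operatorname{h}(a),\operatorname{t}(a)}\prod_{x\ni a} x$, and $A = kQ/\ker\eta$ is the ghor algebra. Via $\eta$, $A$ is a matrix ring $[A_{ij}] \subseteq M_n(B)$ with $B = k[\mathcal{P}]$, where $A_{ij}\subseteq B$ is the set of single nonzero entries of images of elements of $e_iAe_j$, and $A_i := A_{ii}$. The cycle algebra is $S = k[\cup_i A_i]$. For $\mathfrak{q} \in \operatorname{Spec}S$, the cyclic localization is $A_{\mathfrak{q}} = \langle [A_{ij}(A_j)_{\mathfrak{q}\cap A_j}]_{i,j}\rangle \subseteq M_n(\operatorname{Frac}B)$, where $(A_j)_{\mathfrak{q}\cap A_j}$ is the localization of $A_j$ at the prime $\mathfrak{q}\cap A_j$. A path $p$ (with tail $\operatorname{t}(p)$, head $\operatorname{h}(p)$) is locally invertible in $A_{\mathfrak{q}}$ if there is $q \in e_{\operatorname{t}(p)}A_{\mathfrak{q}}e_{\operatorname{h}(p)}$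 with $qp = e_{\operatorname{t}(p)}$ and $pq = e_{\operatorname{h}(p)}$. *)

theory Defs
  imports "HOL-Library.Poly_Mapping" "HOL-Library.Countable"
    "HOL-Computational_Algebra.Fraction_Field" "HOL-Computational_Algebra.Polynomial"
begin

text \<open>The empty list is not used as a path; trivial paths are the
  idempotents e_i.\<close>

definition is_path :: "('a \<Rightarrow> 'v) \<Rightarrow> ('a \<Rightarrow> 'v) \<Rightarrow> 'a list \<Rightarrow> bool" where
  "is_path hq tq p \<longleftrightarrow> p \<noteq> [] \<and> (\<forall>k. Suc k < length p \<longrightarrow> hq (p ! k) = tq (p ! Suc k))"

definition ptail :: "('a \<Rightarrow> 'v) \<Rightarrow> 'a list \<Rightarrow> 'v" where
  "ptail tq p = tq (hd p)"

definition phead :: "('a \<Rightarrow> 'v) \<Rightarrow> 'a list \<Rightarrow> 'v" where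
  "phead hq p = hq (last p)"

definition paths_from_to :: "('a \<Rightarrow> 'v) \<Rightarrow> ('a \<Rightarrow> 'v) \<Rightarrow> 'v \<Rightarrow> 'v \<Rightarrow> 'a list set" where
  "paths_from_to hq tq j i =
     {p. (p = [] \<and> i = j) \<or> (is_path hq tq p \<and> ptail tq p = j \<and> phead hq p = i)}"

definition is_cycle :: "('a \<Rightarrow> 'v) \<Rightarrow> ('a \<Rightarrow> 'v) \<Rightarrow> 'a list \<Rightarrow> bool" where
  "is_cycle hq tq p \<longleftrightarrow> is_path hq tq p \<and> phead hq p = ptail tq p"

definition is_subpath :: "'a list \<Rightarrow> 'a list \<Rightarrow> bool" where
  "is_subpath s p \<longleftrightarrow> s \<noteq> [] \<and> (\<exists>xs zs. p = xs @ s @ zs)"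

definition is_unit_cycle :: "('a \<Rightarrow> 'v) \<Rightarrow> ('a \<Rightarrow> 'v) \<Rightarrow> 'a list \<Rightarrow> bool" where
  "is_unit_cycle hq tq c \<longleftrightarrow> c \<noteq> [] \<and> distinct c \<and>
     (\<forall>k < length c. hq (c ! k) = tq (c ! (Suc k mod length c)))"

definition cyc_pos :: "'a list \<Rightarrow> 'a \<Rightarrow> nat" where
  "cyc_pos c a = (THE k. k < length c \<and> c ! k = a)"

definition cyc_succ :: "'a list \<Rightarrow> 'a \<Rightarrow> 'a" where
  "cyc_succ c a = c ! (Suc (cyc_pos c a) mod length c)"

definition cyc_pred :: "'a list \<Rightarrow> 'a \<Rightarrow> 'a" where
  "cyc_pred c a = c ! ((cyc_pos c a + length c - 1) mod length c)"

definition face_of :: "'a list set \<Rightarrow> 'a \<Rightarrow> 'a list" where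
  "face_of U a = (THE c. c \<in> U \<and> a \<in> set c)"

text \<open>Rotation of the incoming arrows at a vertex: go from the incoming arrow a to the next
  arrow b of its positive face (b leaves the vertex), and then to the arrow preceding b in its
  negative face (which again enters the vertex).  The orbits of this rotation on the incoming
  arrows at v are the points of the (smooth) surface lying over v.\<close>
definition link_rot :: "'a list set \<Rightarrow> 'a list set \<Rightarrow> 'a \<Rightarrow> 'a" where
  "link_rot Up Um a = (let b = cyc_succ (face_of Up a) a in cyc_pred (face_of Um b) b)"

definition link_orbits :: "('a \<Rightarrow> 'v) \<Rightarrow> 'a list set \<Rightarrow> 'a list set \<Rightarrow> 'v \<Rightarrow> nat" where
  "link_orbits hq Up Um v =
     card ((\<lambda>a. {(link_rot Up Um ^^ k) a | k. True}) ` {a. hq a = v})"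

text \<open>A dimer quiver: finite quiver together with its positive (say counterclockwise) and
  negative (clockwise) unit cycles = boundaries of the faces of Sigma minus Q.  Gluing discs along the unit
  cycles gives a compact orientable surface; it is smooth iff every vertex link is a single
  circle, and has (exactly) two points identified iff exactly one vertex has a link with two
  circles and all others have a single circle.\<close>
definition dimer_quiver ::
  "('a::finite \<Rightarrow> 'v::finite) \<Rightarrow> ('a \<Rightarrow> 'v) \<Rightarrow> 'a list set \<Rightarrow> 'a list set \<Rightarrow> bool" where
  "dimer_quiver hq tq Up Um \<longleftrightarrow>
     (\<forall>c \<in> Up \<union> Um. is_unit_cycle hq tq c) \<and> Up \<inter> Um = {} \<and>
     (\<forall>a. \<exists>!c. c \<in> Up \<and> a \<in> set c) \<and> (\<forall>a. \<exists>!c. c \<in> Um \<and> a \<in> set c) \<and>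
     (\<forall>v. \<exists>a. hq a = v) \<and>
     (\<forall>v. link_orbits hq Up Um v \<in> {1, 2}) \<and>
     card {v. link_orbits hq Up Um v \<noteq> 1} \<le> 1"

definition perfect_matchings :: "'a list set \<Rightarrow> 'a list set \<Rightarrow> 'a set set" where
  "perfect_matchings Up Um = {D. \<forall>c \<in> Up \<union> Um. card (D \<inter> set c) = 1}"

text \<open>We realise B = k[P] inside the polynomial ring in countably many variables x_0, x_1, ...
  over k (monomials are finitely supported exponent vectors), the variable of
  a perfect matching D being x_(to_nat D) (an injective numbering).  Frac B is realised inside
  the fraction field of this big polynomial ring.\<close>

type_synonym 'k mpoly_ring = "(nat \<Rightarrow>\<^sub>0 nat) \<Rightarrow>\<^sub>0 'k"
type_synonym 'k ratfun = "'k mpoly_ring fract"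

definition pm_var :: "'a::finite set \<Rightarrow> 'k::field ratfun" where
  "pm_var D = Fract (Poly_Mapping.single (Poly_Mapping.single (to_nat (\<lambda>x. x \<in> D)) 1) 1) 1"

definition scal :: "'k::field \<Rightarrow> 'k ratfun" where
  "scal c = Fract (Poly_Mapping.single 0 c) 1"

text \<open>eta(a) has the single nonzero entry prod_{x in P, a in x} x at (h(a), t(a)).\<close>
definition arrow_wt :: "'a list set \<Rightarrow> 'a list set \<Rightarrow> 'a::finite \<Rightarrow> 'k::field ratfun" where
  "arrow_wt Up Um a = (\<Prod>D \<in> {D \<in> perfect_matchings Up Um. a \<in> D}. pm_var D)"

definition path_wt :: "'a list set \<Rightarrow> 'a list set \<Rightarrow> 'a::finite list \<Rightarrow> 'k::field ratfun" where
  "path_wt Up Um p = (\<Prod>a \<leftarrow> p. arrow_wt Up Um a)"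

text \<open>A_ij = single nonzero (i,j)-entries of eta(e_i kQ e_j), i.e. the k-span of the
  weights of the paths from j to i.\<close>
definition ghor_entry ::
  "('a::finite \<Rightarrow> 'v) \<Rightarrow> ('a \<Rightarrow> 'v) \<Rightarrow> 'a list set \<Rightarrow> 'a list set \<Rightarrow> 'v \<Rightarrow> 'v \<Rightarrow> 'k::field ratfun set" where
  "ghor_entry hq tq Up Um i j =
     {(\<Sum>p \<in> P. scal (c p) * path_wt Up Um p) | P c. finite P \<and> P \<subseteq> paths_from_to hq tq j i}"

inductive_set cycle_alg ::
  "('a::finite \<Rightarrow> 'v) \<Rightarrow> ('a \<Rightarrow> 'v) \<Rightarrow> 'a list set \<Rightarrow> 'a list set \<Rightarrow> 'k::field ratfun set"
  for hq tq Up Um where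
    gen: "x \<in> ghor_entry hq tq Up Um i i \<Longrightarrow> x \<in> cycle_alg hq tq Up Um"
  | add: "x \<in> cycle_alg hq tq Up Um \<Longrightarrow> y \<in> cycle_alg hq tq Up Um \<Longrightarrow> x + y \<in> cycle_alg hq tq Up Um"
  | mult: "x \<in> cycle_alg hq tq Up Um \<Longrightarrow> y \<in> cycle_alg hq tq Up Um \<Longrightarrow> x * y \<in> cycle_alg hq tq Up Um"

definition prime_ideal_of :: "'r::comm_ring_1 set \<Rightarrow> 'r set \<Rightarrow> bool" where
  "prime_ideal_of S q \<longleftrightarrow> q \<subseteq> S \<and> 0 \<in> q \<and> 1 \<notin> q \<and>
     (\<forall>x\<in>q. \<forall>y\<in>q. x + y \<in> q) \<and> (\<forall>s\<in>S. \<forall>x\<in>q. s * x \<in> q) \<and>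
     (\<forall>x\<in>S. \<forall>y\<in>S. x * y \<in> q \<longrightarrow> x \<in> q \<or> y \<in> q)"

definition loc_cycles ::
  "('a::finite \<Rightarrow> 'v) \<Rightarrow> ('a \<Rightarrow> 'v) \<Rightarrow> 'a list set \<Rightarrow> 'a list set \<Rightarrow> 'k::field ratfun set \<Rightarrow> 'v \<Rightarrow> 'k ratfun set" where
  "loc_cycles hq tq Up Um q j =
     {a / s | a s. a \<in> ghor_entry hq tq Up Um j j \<and> s \<in> ghor_entry hq tq Up Um j j \<and> s \<notin> q}"

type_synonym ('v, 'k) rmat = "'v \<Rightarrow> 'v \<Rightarrow> 'k ratfun"

definition mmult :: "('v::finite, 'k::field) rmat \<Rightarrow> ('v, 'k) rmat \<Rightarrow> ('v, 'k) rmat" where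
  "mmult M N = (\<lambda>i j. \<Sum>l\<in>UNIV. M i l * N l j)"

definition madd :: "('v::finite, 'k::field) rmat \<Rightarrow> ('v, 'k) rmat \<Rightarrow> ('v, 'k) rmat" where
  "madd M N = (\<lambda>i j. M i j + N i j)"

definition idem :: "'v \<Rightarrow> ('v, 'k::field) rmat" where
  "idem v = (\<lambda>i j. if i = v \<and> j = v then 1 else 0)"

definition path_mat ::
  "('a::finite \<Rightarrow> 'v) \<Rightarrow> ('a \<Rightarrow> 'v) \<Rightarrow> 'a list set \<Rightarrow> 'a list set \<Rightarrow> 'a list \<Rightarrow> ('v, 'k::field) rmat" where
  "path_mat hq tq Up Um p =
     (\<lambda>i j. if i = phead hq p \<and> j = ptail tq p then path_wt Up Um p else 0)"

inductive_set cyc_loc ::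
  "('a::finite \<Rightarrow> 'v::finite) \<Rightarrow> ('a \<Rightarrow> 'v) \<Rightarrow> 'a list set \<Rightarrow> 'a list set \<Rightarrow> 'k::field ratfun set
     \<Rightarrow> ('v, 'k) rmat set"
  for hq tq Up Um q where
    gen: "(\<forall>i j. M i j \<in> {a * b | a b. a \<in> ghor_entry hq tq Up Um i j \<and> b \<in> loc_cycles hq tq Up Um q j})
          \<Longrightarrow> M \<in> cyc_loc hq tq Up Um q"
  | add: "M \<in> cyc_loc hq tq Up Um q \<Longrightarrow> N \<in> cyc_loc hq tq Up Um q \<Longrightarrow> madd M N \<in> cyc_loc hq tq Up Um q"
  | mult: "M \<in> cyc_loc hq tq Up Um q \<Longrightarrow> N \<in> cyc_loc hq tq Up Um q \<Longrightarrow> mmult M N \<in> cyc_loc hq tq Up Um q"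

definition loc_invertible ::
  "('a::finite \<Rightarrow> 'v::finite) \<Rightarrow> ('a \<Rightarrow> 'v) \<Rightarrow> 'a list set \<Rightarrow> 'a list set \<Rightarrow> 'k::field ratfun set
     \<Rightarrow> 'a list \<Rightarrow> bool" where
  "loc_invertible hq tq Up Um q p \<longleftrightarrow>
     (\<exists>Q. (\<exists>X \<in> cyc_loc hq tq Up Um q. Q = mmult (mmult (idem (ptail tq p)) X) (idem (phead hq p))) \<and>
          mmult Q (path_mat hq tq Up Um p) = idem (ptail tq p) \<and>
          mmult (path_mat hq tq Up Um p) Q = idem (phead hq p))"

end

theory Submission
  imports Defs
begin

definition sm :: "'v \<Rightarrow> 'v \<Rightarrow> 'k::field ratfun \<Rightarrow> ('v, 'k) rmat" where
  "sm i j a = (\<lambda>r c. if r = i \<and> c = j then a else 0)"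

lemma L1: "mmult (sm i j a) (M::('v::finite,'k::field) rmat) = (\<lambda>r c. if r = i then a * M j c else 0)"
proof (rule ext, rule ext)
  fix r c
  have "(\<Sum>l\<in>UNIV. sm i j a r l * M l c) = (\<Sum>l\<in>UNIV. if l = j then (if r = i then a * M j c else 0) else 0)"
    by (rule sum.cong) (auto simp: sm_def)
  then show "mmult (sm i j a) M r c = (if r = i then a * M j c else 0)"
    by (simp add: mmult_def)
qed

lemma L2: "mmult (M::('v::finite,'k::field) rmat) (sm j k b) = (\<lambda>r c. if c = k then M r j * b else 0)"
proof (rule ext, rule ext)
  fix r c
  have "(\<Sum>l\<in>UNIV. M r l * sm j k b l c) = (\<Sum>l\<in>UNIV. if l = j then (if c = k then M r j * b else 0) else 0)"
    by (rule sum.cong) (auto simp: sm_def)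
  then show "mmult M (sm j k b) r c = (if c = k then M r j * b else 0)"
    by (simp add: mmult_def)
qed

lemma idem_sm: "idem v = sm v v 1"
  by (simp add: idem_def sm_def)

lemma path_mat_sm: "path_mat hq tq Up Um p = sm (phead hq p) (ptail tq p) (path_wt Up Um p)"
  by (simp add: path_mat_def sm_def)

lemma scal1: "scal 1 = 1"
  by (simp add: scal_def One_fract_def)

lemma zero_ge: "(0::'k::field ratfun) \<in> ghor_entry hq tq Up Um i j"
  unfolding ghor_entry_def
  by (rule CollectI, rule exI[of _ "{}"], auto)

lemma path_ge:
  assumes "p \<in> paths_from_to hq tq j i"
  shows "(path_wt Up Um p :: 'k::field ratfun) \<in> ghor_entry hq tq Up Um i j"
  unfolding ghor_entry_def
  apply (rule CollectI, rule exI[of _ "{p}"], rule exI[of _ "\<lambda>_. 1"])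
  using assms by (auto simp: scal1)

lemma one_ge: "(1::'k::field ratfun) \<in> ghor_entry hq tq Up Um j j"
proof -
  have "[] \<in> paths_from_to hq tq j j" by (simp add: paths_from_to_def)
  from path_ge[OF this, where Up=Up and Um=Um, where 'k='k] show ?thesis
    by (simp add: path_wt_def)
qed

lemma one_lc:
  assumes "1 \<notin> q"
  shows "(1::'k::field ratfun) \<in> loc_cycles hq tq Up Um q j"
proof -
  have "(1::'k ratfun) = 1 / 1" by simp
  then show ?thesis unfolding loc_cycles_def
    using one_ge[where 'k='k and hq=hq and tq=tq and Up=Up and Um=Um and j=j] assms by blast
qed

lemma sm_cyc:
  assumes "1 \<notin> q" and "w \<in> ghor_entry hq tq Up Um i j"
  shows "(sm i j w :: ('v::finite,'k::field) rmat) \<in> cyc_loc hq tq Up Um q"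
proof -
  have "\<forall>r c. sm i j w r c \<in> {a * b |a b. a \<in> ghor_entry hq tq Up Um r c \<and> b \<in> loc_cycles hq tq Up Um q c}"
  proof (intro allI)
    fix r c
    have "sm i j w r c = sm i j w r c * 1" by simp
    moreover have "sm i j w r c \<in> ghor_entry hq tq Up Um r c"
      using assms(2) zero_ge by (auto simp: sm_def)
    ultimately show "sm i j w r c \<in> {a * b |a b. a \<in> ghor_entry hq tq Up Um r c \<and> b \<in> loc_cycles hq tq Up Um q c}"
      using one_lc[OF assms(1), of hq tq Up Um c] by blast
  qed
  then show ?thesis using cyc_loc.gen[where M="sm i j w"] by blast
qed

lemma path_pre: "is_path hq tq (a @ b) \<Longrightarrow> a \<noteq> [] \<Longrightarrow> is_path hq tq a"
  unfolding is_path_def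
  by (metis Suc_lessD length_append nth_append trans_less_add1)

lemma path_suf:
  assumes h: "is_path hq tq (a @ b)" and bne: "b \<noteq> []"
  shows "is_path hq tq b"
  unfolding is_path_def
proof (intro conjI allI impI)
  show "b \<noteq> []" by (fact bne)
  fix k assume k: "Suc k < length b"
  have "Suc (length a + k) < length (a @ b)" using k by simp
  then have "hq ((a @ b) ! (length a + k)) = tq ((a @ b) ! Suc (length a + k))"
    using h unfolding is_path_def by blast
  moreover have "(a @ b) ! (length a + k) = b ! k" by (rule nth_append_length_plus)
  moreover have "(a @ b) ! Suc (length a + k) = b ! Suc k"
    using nth_append_length_plus[of a b "Suc k"] by simp
  ultimately show "hq (b ! k) = tq (b ! Suc k)" by simp
qed

lemma path_join: "is_path hq tq (a @ b) \<Longrightarrow> a \<noteq> [] \<Longrightarrow> b \<noteq> [] \<Longrightarrow> hq (last a) = tq (hd b)"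
  unfolding is_path_def
proof -
  assume h: "a @ b \<noteq> [] \<and> (\<forall>k. Suc k < length (a @ b) \<longrightarrow> hq ((a @ b) ! k) = tq ((a @ b) ! Suc k))"
    and a: "a \<noteq> []" and b: "b \<noteq> []"
  have "Suc (length a - 1) < length (a @ b)" using a b by (cases a; cases b) auto
  then have "hq ((a @ b) ! (length a - 1)) = tq ((a @ b) ! Suc (length a - 1))" using h by blast
  moreover have "(a @ b) ! (length a - 1) = last a" using a by (simp add: nth_append last_conv_nth)
  moreover have "(a @ b) ! Suc (length a - 1) = hd b" using a b by (simp add: nth_append hd_conv_nth)
  ultimately show ?thesis by simp
qed

theorem lemma4p4:
  fixes hq tq :: "'a::finite \<Rightarrow> 'v::finite"
    and Up Um :: "'a list set"
    and q :: "'k::alg_closed_field ratfun set"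
  assumes "dimer_quiver hq tq Up Um"
    and "prime_ideal_of (cycle_alg hq tq Up Um) q"
  shows "\<forall>p s. is_cycle hq tq p \<and> loc_invertible hq tq Up Um q p \<and> is_subpath s p
           \<longrightarrow> loc_invertible hq tq Up Um q s"
proof (intro allI impI)
  fix p s
  assume H: "is_cycle hq tq p \<and> loc_invertible hq tq Up Um q p \<and> is_subpath s p"
  have q1: "1 \<notin> q" using assms(2) by (simp add: prime_ideal_of_def)
  define v where "v = ptail tq p"
  have pp: "is_path hq tq p" and hv: "phead hq p = v" using H by (auto simp: is_cycle_def v_def)
  obtain xs zs where pe: "p = xs @ s @ zs" and sne: "s \<noteq> []" using H by (auto simp: is_subpath_def)
  obtain X where X: "X \<in> cyc_loc hq tq Up Um q"
    and inv: "mmult (mmult (mmult (idem v) X) (idem v)) (path_mat hq tq Up Um p) = idem v"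
    using H hv by (auto simp: loc_invertible_def v_def)
  let ?w = "path_wt Up Um :: 'a list \<Rightarrow> 'k ratfun"
  have "mmult (mmult (mmult (idem v) X) (idem v)) (path_mat hq tq Up Um p) v v = idem v v v"
    using inv by simp
  then have Xv: "X v v * ?w p = 1"
    unfolding idem_sm path_mat_sm hv v_def[symmetric] L1 L2 by (simp add: sm_def)
  define ts where "ts = ptail tq s"
  define hs where "hs = phead hq s"
  have wp: "?w p = ?w xs * ?w s * ?w zs" by (simp add: pe path_wt_def mult.assoc)
  have Mx: "sm ts v (?w xs) \<in> cyc_loc hq tq Up Um q"
  proof (cases "xs = []")
    case True
    then have "ts = v" using pe sne by (simp add: ts_def v_def ptail_def)
    then show ?thesis using True sm_cyc[OF q1 one_ge] by (simp add: path_wt_def)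
  next
    case False
    have "is_path hq tq xs" using pp pe False path_pre[of hq tq xs "s @ zs"] by simp
    moreover have "ptail tq xs = v" using False pe by (simp add: v_def ptail_def)
    moreover have "phead hq xs = ts" using pp pe False sne path_join[of hq tq xs "s @ zs"]
      by (simp add: ts_def phead_def ptail_def)
    ultimately have "xs \<in> paths_from_to hq tq v ts" by (simp add: paths_from_to_def)
    then show ?thesis using sm_cyc[OF q1 path_ge] by blast
  qed
  have Mz: "sm v hs (?w zs) \<in> cyc_loc hq tq Up Um q"
  proof (cases "zs = []")
    case True
    then have "hs = v" using pe sne hv by (simp add: hs_def phead_def)
    then show ?thesis using True sm_cyc[OF q1 one_ge] by (simp add: path_wt_def)
  next
    case False
    have "is_path hq tq zs" using pp pe False path_suf[of hq tq "xs @ s" zs] by simp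
    moreover have "phead hq zs = v" using False pe hv by (simp add: phead_def)
    moreover have "ptail tq zs = hs" using pp pe False sne path_join[of hq tq "xs @ s" zs]
      by (simp add: hs_def phead_def ptail_def)
    ultimately have "zs \<in> paths_from_to hq tq hs v" by (simp add: paths_from_to_def)
    then show ?thesis using sm_cyc[OF q1 path_ge] by blast
  qed
  define Y where "Y = mmult (mmult (sm ts v (?w xs)) X) (sm v hs (?w zs))"
  have Y: "Y \<in> cyc_loc hq tq Up Um q" unfolding Y_def
    using Mx Mz X cyc_loc.mult by blast
  have "?w xs * X v v * ?w zs * ?w s = X v v * ?w p" unfolding wp by (simp only: mult_ac)
  then have key: "?w xs * X v v * ?w zs * ?w s = 1" using Xv by simp
  define c0 where "c0 = ?w xs * X v v * ?w zs"
  have QE: "mmult (mmult (idem ts) Y) (idem hs) = sm ts hs c0"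
    unfolding Y_def idem_sm L1 L2 c0_def by (intro ext) (simp add: sm_def)
  have k2: "c0 * ?w s = 1" using key by (simp add: c0_def)
  have k3: "?w s * c0 = 1" using k2 by (simp add: mult.commute)
  show "loc_invertible hq tq Up Um q s"
    unfolding loc_invertible_def ts_def[symmetric] hs_def[symmetric]
  proof (intro exI conjI)
    show "\<exists>X\<in>cyc_loc hq tq Up Um q. mmult (mmult (idem ts) Y) (idem hs)
        = mmult (mmult (idem ts) X) (idem hs)" using Y by blast
    show "mmult (mmult (mmult (idem ts) Y) (idem hs)) (path_mat hq tq Up Um s) = idem ts"
      unfolding QE path_mat_sm ts_def[symmetric] hs_def[symmetric] L1
      by (intro ext) (simp add: sm_def idem_def k2)
    show "mmult (path_mat hq tq Up Um s) (mmult (mmult (idem ts) Y) (idem hs)) = idem hs"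
      unfolding QE path_mat_sm ts_def[symmetric] hs_def[symmetric] L2
      by (intro ext) (simp add: sm_def idem_def k3)
  qed
qed

end
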